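(* Let $P_n$ be a labeled path with ad-pattern $w=w_1\cdots w_{n-1}$ and ribbon composition $\alpha=(\alpha_1,\dots,\alpha_\ell)$. Suppose that (1) $w$ does not contain $ddaa$ as a factor, $w$ does not begin with $daa$, and $w$ does not end with $dda$ (i.e. $RT(P_n)$ contains no $(1,1,3)$ sub-ribbon, does not begin with a $(1,3)$ sub-ribbon, and does not end with a $(1,1,2)$ sub-ribbon); and (2) $RT(P_n)$ is regular, i.e. there is an index $j<\ell$ with $\alpha_j=2$ and either $\alpha_{j+1}\ge 2$, or $j+1=\ell$ and $\alpha_{\ell}=1$. Then $X(P_n;\mathbf{x},q)$ is not symmetric.
   Context: A labeled path $P_n$ is the path graph with vertices $v_1,\dots,v_n$ (edges $v_iv_{i+1}$) where $v_i$ carries label $\sigma_i$ for a permutation $\sigma$ of $[n]$; vertices are identified with labels. A proper coloring is $c\colon[n]\to\{1,2,\dots\}$ with adjacent vertices colored differently; $\operatorname{asc}(c)=\#\{ij\in E: i<j,\ c(i)<c(j)\}$. The CQF is $X(P_n;\mathbf{x},q)=\sum_{c \text{ proper}} x_{c(1)}\cdots x_{c(n)}q^{\operatorname{asc}(c)}$; it is symmetric if each coefficient of $q^k$ is a symmetric function. The ad-pattern of $P_n$ is $w_1\cdots w_{n-1}$ with $w_i=a$ if $\sigma_i<\sigma_{i+1}$ and $w_i=d$ otherwise. The ribbon diagram $RT(P_n)$: start with box $1$, and for $i=1,\dots,n-1$ place box $i+1$ immediately right of box $i$ if $w_i=a$ and immediately above box $i$ if $w_i=d$. Its composition $(\alpha_1,\dots,\alpha_\ell)$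 lists the number of boxes in each row, from the bottom row up. A $\beta$ sub-ribbon is a set of consecutive boxes whose shape is the ribbon with row lengths $\beta$. *)

theory Defs
  imports Main "HOL-Library.FuncSet" "HOL-Library.Sublist"
begin

text \<open>A labeled path P_n is given by the list sigma = [sigma_1,...,sigma_n], a permutation
  of [n]; vertex v_i carries label sigma_i, and vertices are identified with labels.\<close>

definition is_labeled_path :: "nat list \<Rightarrow> bool" where
  "is_labeled_path \<sigma> \<longleftrightarrow> distinct \<sigma> \<and> set \<sigma> = {1..length \<sigma>}"

definition path_edges :: "nat list \<Rightarrow> (nat \<times> nat) set" where
  "path_edges \<sigma> = {(min (\<sigma> ! i) (\<sigma> ! Suc i), max (\<sigma> ! i) (\<sigma> ! Suc i)) | i. Suc i < length \<sigma>}"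

definition proper_coloring :: "nat list \<Rightarrow> (nat \<Rightarrow> nat) \<Rightarrow> bool" where
  "proper_coloring \<sigma> c \<longleftrightarrow> (\<forall>(i,j)\<in>path_edges \<sigma>. c i \<noteq> c j)"

definition asc :: "nat list \<Rightarrow> (nat \<Rightarrow> nat) \<Rightarrow> nat" where
  "asc \<sigma> c = card {(i,j) \<in> path_edges \<sigma>. c i < c j}"

text \<open>Coefficient of q^k x^a in X(P_n; x, q), where the exponent vector a : nat => nat
  assigns to each color i >= 1 the exponent of x_i.\<close>
definition cqf_coeff :: "nat list \<Rightarrow> nat \<Rightarrow> (nat \<Rightarrow> nat) \<Rightarrow> nat" where
  "cqf_coeff \<sigma> k a = card {c. c \<in> {1..length \<sigma>} \<rightarrow>\<^sub>E {1..} \<and> proper_coloring \<sigma> c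
       \<and> asc \<sigma> c = k \<and> (\<forall>i. card {v \<in> {1..length \<sigma>}. c v = i} = a i)}"

text \<open>X is symmetric iff each coefficient of q^k is a symmetric function, i.e. invariant
  under every permutation of the variables x_1, x_2, ... (permutations of the positive integers).\<close>
definition cqf_symmetric :: "nat list \<Rightarrow> bool" where
  "cqf_symmetric \<sigma> \<longleftrightarrow>
     (\<forall>k a \<pi>. bij \<pi> \<and> \<pi> 0 = 0 \<longrightarrow> cqf_coeff \<sigma> k (a \<circ> \<pi>) = cqf_coeff \<sigma> k a)"

datatype ad = A | D

definition ad_pattern :: "nat list \<Rightarrow> ad list" where
  "ad_pattern \<sigma> = map (\<lambda>i. if \<sigma> ! i < \<sigma> ! Suc i then A else D) [0..<length \<sigma> - 1]"

text \<open>Composition of the ribbon diagram RT(P_n): row lengths from bottom row up.\<close>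
fun ribbon_comp :: "ad list \<Rightarrow> nat list" where
  "ribbon_comp [] = [1]"
| "ribbon_comp (A # w) = (let r = ribbon_comp w in Suc (hd r) # tl r)"
| "ribbon_comp (D # w) = 1 # ribbon_comp w"

definition regular_ribbon :: "nat list \<Rightarrow> bool" where
  "regular_ribbon \<alpha> \<longleftrightarrow> (\<exists>j. Suc j < length \<alpha> \<and> \<alpha> ! j = 2 \<and>
      (\<alpha> ! Suc j \<ge> 2 \<or> (Suc (Suc j) = length \<alpha> \<and> \<alpha> ! Suc j = 1)))"

end

theory Submission
  imports Defs
begin


definition isoA :: "ad list \<Rightarrow> nat \<Rightarrow> bool" where
  "isoA w j \<longleftrightarrow> j < length w \<and> w!j = A \<and> (j = 0 \<or> w!(j-1) = D) \<and> (Suc j = length w \<or> w!Suc j = D)"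

lemma rc_ne: "ribbon_comp w \<noteq> []"
  by (induction w rule: ribbon_comp.induct) (auto simp: Let_def)

lemma rc_hd: "hd (ribbon_comp w) \<ge> 1"
  by (induction w rule: ribbon_comp.induct) (auto simp: Let_def)

lemma rc_iso:
  "(2 \<in> set (ribbon_comp w) \<longrightarrow> (\<exists>j. isoA w j)) \<and> (2 \<in> set (tl (ribbon_comp w)) \<longrightarrow> (\<exists>j. j \<ge> 1 \<and> isoA w j))"
proof (induction w)
  case Nil
  then show ?case by simp
next
  case (Cons x w)
  show ?case
  proof (cases x)
    case A
    have r: "ribbon_comp (A # w) = Suc (hd (ribbon_comp w)) # tl (ribbon_comp w)"
      by (simp add: Let_def)
    have shift: "isoA w j \<Longrightarrow> j \<ge> 1 \<Longrightarrow> isoA (A # w) (Suc j)" for j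
      unfolding isoA_def by (cases j) auto
    have t2: "2 \<in> set (tl (ribbon_comp (A#w))) \<longrightarrow> (\<exists>j. j \<ge> 1 \<and> isoA (A#w) j)"
      using Cons.IH shift r by (metis Suc_le_mono le_SucI list.sel(3) one_le_numeral zero_less_Suc less_eq_Suc_le)
    have t1: "2 \<in> set (ribbon_comp (A#w)) \<longrightarrow> (\<exists>j. isoA (A#w) j)"
    proof
      assume h: "2 \<in> set (ribbon_comp (A#w))"
      show "\<exists>j. isoA (A#w) j"
      proof (cases "hd (ribbon_comp w) = 1")
        case True
        have "w = [] \<or> hd w = D"
        proof (cases w)
          case (Cons y ys) then show ?thesis using True rc_hd[of ys]
            by (cases y) (auto simp: Let_def)
        qed simp
        then have "isoA (A#w) 0" unfolding isoA_def by (cases w) auto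
        then show ?thesis by blast
      next
        case False
        then have "2 \<in> set (tl (ribbon_comp w))" using h r by auto
        then show ?thesis using Cons.IH shift by blast
      qed
    qed
    show ?thesis using t1 t2 A by simp
  next
    case D
    have shift: "isoA w j \<Longrightarrow> isoA (D # w) (Suc j)" for j
      unfolding isoA_def by (cases j) auto
    show ?thesis using Cons.IH shift D by (auto simp: Let_def)
  qed
qed


definition Kc :: "nat list \<Rightarrow> (nat \<Rightarrow> bool) \<Rightarrow> nat" where
  "Kc \<sigma> d = card {i. Suc i < length \<sigma> \<and> (d i = (\<sigma>!i < \<sigma>!Suc i))}"

definition ascP :: "nat list \<Rightarrow> (nat \<Rightarrow> nat) \<Rightarrow> nat" where
  "ascP \<sigma> f = Kc \<sigma> (\<lambda>i. f i < f (Suc i))"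

definition cb :: "nat list \<Rightarrow> (nat \<Rightarrow> nat) \<Rightarrow> nat \<Rightarrow> nat" where
  "cb \<sigma> f = restrict (\<lambda>v. f (inv_into {..<length \<sigma>} (nth \<sigma>) v)) {1..length \<sigma>}"

lemma lp_bij: "is_labeled_path \<sigma> \<Longrightarrow> bij_betw (nth \<sigma>) {..<length \<sigma>} {1..length \<sigma>}"
  unfolding is_labeled_path_def
  by (metis atLeast_upt bij_betw_nth lessThan_atLeast0 set_upt) 

lemma lp_nth: "is_labeled_path \<sigma> \<Longrightarrow> i < length \<sigma> \<Longrightarrow> \<sigma>!i \<in> {1..length \<sigma>}"
  using lp_bij bij_betwE by blast

lemma lp_inj: "is_labeled_path \<sigma> \<Longrightarrow> i < length \<sigma> \<Longrightarrow> j < length \<sigma> \<Longrightarrow> \<sigma>!i = \<sigma>!j \<Longrightarrow> i = j"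
  unfolding is_labeled_path_def by (simp add: nth_eq_iff_index_eq)

lemma cb_nth: "is_labeled_path \<sigma> \<Longrightarrow> i < length \<sigma> \<Longrightarrow> cb \<sigma> f (\<sigma>!i) = f i"
  unfolding cb_def using lp_nth[of \<sigma> i] lp_bij[of \<sigma>]
  by (simp add: bij_betw_imp_inj_on inv_into_f_f)

lemma Kc_cong: "(\<And>i. Suc i < length \<sigma> \<Longrightarrow> d i = d' i) \<Longrightarrow> Kc \<sigma> d = Kc \<sigma> d'"
  unfolding Kc_def by (rule arg_cong[where f=card]) auto

lemma Kc_compl: "Kc \<sigma> d + Kc \<sigma> (\<lambda>i. \<not> d i) = length \<sigma> - 1"
proof -
  have "{i. Suc i < length \<sigma>} = {..<length \<sigma> - 1}" by auto
  then have e: "card {i. Suc i < length \<sigma>} = length \<sigma> - 1" by simp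
  have "card {i. Suc i < length \<sigma> \<and> (d i = (\<sigma>!i < \<sigma>!Suc i))} + card {i. Suc i < length \<sigma> \<and> ((\<not> d i) = (\<sigma>!i < \<sigma>!Suc i))}
     = card ({i. Suc i < length \<sigma> \<and> (d i = (\<sigma>!i < \<sigma>!Suc i))} \<union> {i. Suc i < length \<sigma> \<and> ((\<not> d i) = (\<sigma>!i < \<sigma>!Suc i))})"
    by (rule card_Un_disjoint[symmetric]) (auto intro: finite_subset[of _ "{..<length \<sigma>}"])
  also have "({i. Suc i < length \<sigma> \<and> (d i = (\<sigma>!i < \<sigma>!Suc i))} \<union> {i. Suc i < length \<sigma> \<and> ((\<not> d i) = (\<sigma>!i < \<sigma>!Suc i))}) = {i. Suc i < length \<sigma>}"
    by auto
  finally show ?thesis using e unfolding Kc_def by simp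
qed

lemma Kc_flip:
  assumes "Suc (Suc j) < length \<sigma>"
    and "d' j = (\<not> d j)" "d' (Suc j) = (\<not> d (Suc j))"
    and "\<And>i. i \<noteq> j \<Longrightarrow> i \<noteq> Suc j \<Longrightarrow> d' i = d i"
    and "(d j = (\<sigma>!j < \<sigma>!Suc j)) = (d (Suc j) = (\<sigma>!Suc j < \<sigma>!Suc (Suc j)))"
  shows "Kc \<sigma> d' = Kc \<sigma> d + 2 \<or> Kc \<sigma> d = Kc \<sigma> d' + 2"
proof -
  let ?S = "{i. Suc i < length \<sigma> \<and> (d i = (\<sigma>!i < \<sigma>!Suc i))}"
  let ?S' = "{i. Suc i < length \<sigma> \<and> (d' i = (\<sigma>!i < \<sigma>!Suc i))}"
  have fS: "finite ?S" by (rule finite_subset[of _ "{..<length \<sigma>}"]) auto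
  have fS': "finite ?S'" by (rule finite_subset[of _ "{..<length \<sigma>}"]) auto
  show ?thesis
  proof (cases "d j = (\<sigma>!j < \<sigma>!Suc j)")
    case True
    have "?S = ?S' \<union> {j, Suc j}"
    proof (rule set_eqI)
      fix i show "i \<in> ?S \<longleftrightarrow> i \<in> ?S' \<union> {j, Suc j}"
        by (cases "i = j"; cases "i = Suc j") (use assms True in auto)
    qed
    moreover have "?S' \<inter> {j, Suc j} = {}" using assms True by auto
    ultimately
    have "card ?S = card ?S' + card {j, Suc j}" using fS' by (simp add: card_Un_disjoint)
    then show ?thesis unfolding Kc_def by simp
  next
    case False
    have "?S' = ?S \<union> {j, Suc j}"
    proof (rule set_eqI)
      fix i show "i \<in> ?S' \<longleftrightarrow> i \<in> ?S \<union> {j, Suc j}"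
        by (cases "i = j"; cases "i = Suc j") (use assms False in auto)
    qed
    moreover have "?S \<inter> {j, Suc j} = {}" using assms False by auto
    ultimately
    have "card ?S' = card ?S + card {j, Suc j}" using fS by (simp add: card_Un_disjoint)
    then show ?thesis unfolding Kc_def by simp
  qed
qed

lemma proper_iff: "is_labeled_path \<sigma> \<Longrightarrow>
  proper_coloring \<sigma> c \<longleftrightarrow> (\<forall>i. Suc i < length \<sigma> \<longrightarrow> c (\<sigma>!i) \<noteq> c (\<sigma>!Suc i))"
  unfolding proper_coloring_def path_edges_def
  by (auto simp: min_def max_def split: if_splits) (metis)+

lemma asc_eq: assumes lp: "is_labeled_path \<sigma>" and pr: "proper_coloring \<sigma> c"
  shows "asc \<sigma> c = ascP \<sigma> (\<lambda>i. c (\<sigma>!i))"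
proof -
  let ?e = "\<lambda>i. (min (\<sigma> ! i) (\<sigma> ! Suc i), max (\<sigma> ! i) (\<sigma> ! Suc i))"
  let ?E = "{i. Suc i < length \<sigma> \<and> ((c (\<sigma>!i) < c (\<sigma>!Suc i)) = (\<sigma>!i < \<sigma>!Suc i))}"
  have pr': "\<And>i. Suc i < length \<sigma> \<Longrightarrow> c (\<sigma>!i) \<noteq> c (\<sigma>!Suc i)" using proper_iff[OF lp] pr by blast
  have inj: "inj_on ?e {i. Suc i < length \<sigma>}"
  proof (rule inj_onI)
    fix i j assume i: "i \<in> {i. Suc i < length \<sigma>}" and j: "j \<in> {i. Suc i < length \<sigma>}" and e: "?e i = ?e j"
    have "\<sigma>!i \<noteq> \<sigma>!Suc i" using lp_inj[OF lp, of i "Suc i"] i by auto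
    have "\<sigma>!j \<noteq> \<sigma>!Suc j" using lp_inj[OF lp, of j "Suc j"] j by auto
    have "(\<sigma>!i = \<sigma>!j \<and> \<sigma>!Suc i = \<sigma>!Suc j) \<or> (\<sigma>!i = \<sigma>!Suc j \<and> \<sigma>!Suc i = \<sigma>!j)"
      using e by (auto simp: min_def max_def split: if_splits)
    then show "i = j"
    proof
      assume "\<sigma>!i = \<sigma>!j \<and> \<sigma>!Suc i = \<sigma>!Suc j" then show ?thesis using lp_inj[OF lp, of i j] i j by auto
    next
      assume h: "\<sigma>!i = \<sigma>!Suc j \<and> \<sigma>!Suc i = \<sigma>!j"
      then have "i = Suc j" "Suc i = j" using lp_inj[OF lp, of i "Suc j"] lp_inj[OF lp, of "Suc i" j] i j by auto
      then show ?thesis by simp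
    qed
  qed
  have "{(i,j) \<in> path_edges \<sigma>. c i < c j} = ?e ` ?E"
  proof -
    have "\<And>i. Suc i < length \<sigma> \<Longrightarrow> (c (min (\<sigma> ! i) (\<sigma> ! Suc i)) < c (max (\<sigma> ! i) (\<sigma> ! Suc i))) = ((c (\<sigma>!i) < c (\<sigma>!Suc i)) = (\<sigma>!i < \<sigma>!Suc i))"
    proof -
      fix i assume i: "Suc i < length \<sigma>"
      have "\<sigma>!i \<noteq> \<sigma>!Suc i" using lp_inj[OF lp, of i "Suc i"] i by auto
      then show "?thesis i" using pr'[OF i] by (auto simp: min_def max_def)
    qed
    then show ?thesis unfolding path_edges_def by auto
  qed
  then have "asc \<sigma> c = card (?e ` ?E)" unfolding asc_def by simp
  also have "\<dots> = card ?E" by (rule card_image) (rule inj_on_subset[OF inj], auto)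
  finally show ?thesis unfolding ascP_def Kc_def by simp
qed

lemma count_eq: assumes lp: "is_labeled_path \<sigma>"
  shows "card {v \<in> {1..length \<sigma>}. c v = j} = card {i. i < length \<sigma> \<and> c (\<sigma>!i) = j}"
proof -
  have "{v \<in> {1..length \<sigma>}. c v = j} = nth \<sigma> ` {i. i < length \<sigma> \<and> c (\<sigma>!i) = j}"
    using lp_bij[OF lp] unfolding bij_betw_def by auto
  also have "card \<dots> = card {i. i < length \<sigma> \<and> c (\<sigma>!i) = j}"
    by (rule card_image) (rule inj_on_subset[OF bij_betw_imp_inj_on[OF lp_bij[OF lp]]], auto)
  finally show ?thesis .
qed


lemma oddD2: "odd (i::nat) \<Longrightarrow> \<exists>k. i = Suc (2*k)" by presburger
lemma evenD2: "even (i::nat) \<Longrightarrow> \<exists>k. i = 2*k" by presburger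

definition indep :: "nat set \<Rightarrow> bool" where
  "indep I \<longleftrightarrow> (\<forall>i\<in>I. Suc i \<notin> I)"

definition It :: "nat \<Rightarrow> nat \<Rightarrow> nat set" where
  "It m t = {i. i < 2*m \<and> (if i < 2*t then even i else odd i)}"

lemma indep_inj: "indep I \<Longrightarrow> inj_on (\<lambda>i. i div 2) I"
  unfolding indep_def inj_on_def
proof (intro ballI impI)
  fix x y assume h: "\<forall>i\<in>I. Suc i \<notin> I" "x \<in> I" "y \<in> I" "x div 2 = y div 2"
  have "x = y \<or> x = Suc y \<or> y = Suc x" using h(4) by presburger
  then show "x = y" using h by auto
qed

lemma indep_cover:
  assumes sub: "I \<subseteq> {..<n}" and ind: "indep I" and c: "card I = (n+1) div 2"
  shows "\<And>k. k < (n+1) div 2 \<Longrightarrow> 2*k \<in> I \<or> Suc (2*k) \<in> I"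
proof -
  have fin: "finite I" using sub finite_subset by blast
  have im: "(\<lambda>i. i div 2) ` I \<subseteq> {..<(n+1) div 2}" using sub by auto
  have "card ((\<lambda>i. i div 2) ` I) = (n+1) div 2"
    using card_image[OF indep_inj[OF ind]] c by simp
  then have eq: "(\<lambda>i. i div 2) ` I = {..<(n+1) div 2}"
    using card_subset_eq[OF _ im] by simp
  fix k assume "k < (n+1) div 2"
  then have "k \<in> (\<lambda>i. i div 2) ` I" using eq by simp
  then obtain i where i: "i \<in> I" "i div 2 = k" by blast
  then have "i = 2*k \<or> i = Suc (2*k)" by presburger
  then show "2*k \<in> I \<or> Suc (2*k) \<in> I" using i by auto
qed

lemma indep_odd:
  assumes sub: "I \<subseteq> {..<Suc (2*l)}" and ind: "indep I" and c: "card I = Suc l"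
  shows "I = {i. i < Suc (2*l) \<and> even i}"
proof -
  have cov: "\<And>k. k \<le> l \<Longrightarrow> 2*k \<in> I \<or> Suc (2*k) \<in> I"
    using indep_cover[OF sub ind] c by auto
  have ev: "2*(l-k) \<in> I" if "k \<le> l" for k
    using that
  proof (induction k)
    case 0
    have "Suc (2*l) \<notin> I" using sub by auto
    then show ?case using cov[of l] by simp
  next
    case (Suc k)
    then have h: "2*(l-k) \<in> I" by simp
    have e: "Suc (Suc (2*(l - Suc k))) = 2*(l-k)" using Suc.prems by simp
    have "Suc (2*(l - Suc k)) \<notin> I"
    proof
      assume "Suc (2*(l - Suc k)) \<in> I"
      then have "Suc (Suc (2*(l - Suc k))) \<notin> I" using ind unfolding indep_def by blast
      then show False using h e by simp
    qed
    moreover have "l - Suc k \<le> l" by simp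
    ultimately show ?case using cov[of "l - Suc k"] by blast
  qed
  have ev2: "2*k \<in> I" if "k \<le> l" for k using ev[of "l-k"] that by simp
  show ?thesis
  proof (rule set_eqI, rule iffI)
    fix i assume "i \<in> I"
    then have "i < Suc (2*l)" using sub by auto
    moreover have "even i"
    proof (rule ccontr)
      assume "odd i"
      then obtain k where k: "i = Suc (2*k)" using oddD2 by blast
      then have "k \<le> l" using \<open>i < Suc (2*l)\<close> by simp
      then have "2*k \<in> I" using ev2 by blast
      then have "Suc (2*k) \<notin> I" using ind unfolding indep_def by blast
      then show False using \<open>i \<in> I\<close> k by simp
    qed
    ultimately show "i \<in> {i. i < Suc (2*l) \<and> even i}" by simp
  next
    fix i assume "i \<in> {i. i < Suc (2*l) \<and> even i}"
    then have "i = 2*(i div 2)" "i div 2 \<le> l" by auto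
    then show "i \<in> I" using ev2 by metis
  qed
qed

lemma indep_even:
  assumes sub: "I \<subseteq> {..<2*m}" and ind: "indep I" and c: "card I = m"
  shows "\<exists>t\<le>m. I = It m t"
proof -
  have cov: "\<And>k. k < m \<Longrightarrow> 2*k \<in> I \<or> Suc (2*k) \<in> I"
    using indep_cover[OF sub ind] c by auto
  define t where "t = (if \<exists>k<m. Suc (2*k) \<in> I then LEAST k. Suc (2*k) \<in> I else m)"
  have tm: "t \<le> m"
  proof (cases "\<exists>k<m. Suc (2*k) \<in> I")
    case True
    then obtain k0 where k0: "k0 < m" "Suc (2*k0) \<in> I" by blast
    then have "(LEAST k. Suc (2*k) \<in> I) \<le> k0" by (intro Least_le)
    then show ?thesis using True k0 unfolding t_def by simp
  next
    case False then show ?thesis unfolding t_def by auto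
  qed
  have below: "Suc (2*k) \<notin> I" if "k < t" for k
  proof
    assume h: "Suc (2*k) \<in> I"
    then have "k < m" using sub by auto
    then have "t = (LEAST k. Suc (2*k) \<in> I)" using h unfolding t_def by auto
    then show False using not_less_Least[of k "\<lambda>k. Suc (2*k) \<in> I"] that h by simp
  qed
  have above: "Suc (2*k) \<in> I" if "t \<le> k" "k < m" for k
    using that
  proof (induction k rule: dec_induct)
    case base
    then have "\<exists>k<m. Suc (2*k) \<in> I" using t_def by (metis less_irrefl)
    then show ?case unfolding t_def by (auto intro: LeastI_ex)
  next
    case (step k)
    then have "Suc (2*k) \<in> I" by simp
    then have "2 * Suc k \<notin> I" using ind unfolding indep_def by auto
    then show ?case using cov[of "Suc k"] step by auto
  qed
  have "I = It m t"
  proof (rule set_eqI, rule iffI)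
    fix i assume i: "i \<in> I"
    then have il: "i < 2*m" using sub by auto
    show "i \<in> It m t"
    proof (cases "even i")
      case True
      then obtain k where k: "i = 2*k" using evenD2 by blast
      have "k < t"
      proof (rule ccontr)
        assume "\<not> k < t"
        then have "Suc (2*k) \<in> I" using above il k by simp
        then show False using i k ind unfolding indep_def by auto
      qed
      then show ?thesis using il k unfolding It_def by auto
    next
      case False
      then obtain k where k: "i = Suc (2*k)" using oddD2 by blast
      have "\<not> k < t" using below i k by auto
      then show ?thesis using il k False unfolding It_def by auto
    qed
  next
    fix i assume "i \<in> It m t"
    then have i: "i < 2*m" "if i < 2*t then even i else odd i" unfolding It_def by auto
    show "i \<in> I"
    proof (cases "even i")
      case True
      then obtain k where k: "i = 2*k" using evenD2 by blast
      then have "k < t" "k < m" using i by (auto split: if_splits)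
      then show ?thesis using cov[of k] below k by auto
    next
      case False
      then obtain k where k: "i = Suc (2*k)" using oddD2 by blast
      then have "t \<le> k" "k < m" using i False by (auto split: if_splits)
      then show ?thesis using above k by auto
    qed
  qed
  then show ?thesis using tm by blast
qed

lemma card_It: "t \<le> m \<Longrightarrow> card (It m t) = m"
proof -
  assume tm: "t \<le> m"
  have ind: "indep (It m t)" unfolding indep_def It_def by auto
  have "(\<lambda>i. i div 2) ` It m t = {..<m}"
  proof (rule set_eqI, rule iffI)
    fix k assume "k \<in> (\<lambda>i. i div 2) ` It m t" then show "k \<in> {..<m}" unfolding It_def by auto
  next
    fix k assume k: "k \<in> {..<m}"
    show "k \<in> (\<lambda>i. i div 2) ` It m t"
    proof (cases "k < t")
      case True
      then have "2*k \<in> It m t" using k unfolding It_def by auto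
      then show ?thesis by (intro image_eqI[where x="2*k"]) auto
    next
      case False
      then have "Suc (2*k) \<in> It m t" using k unfolding It_def by auto
      moreover have "Suc (2*k) div 2 = k" by simp
      ultimately show ?thesis by (intro image_eqI[where x="Suc (2*k)"]) auto
    qed
  qed
  then show ?thesis using card_image[OF indep_inj[OF ind]] by simp
qed

lemma card_evens: "card {i. i < Suc (2*l) \<and> even i} = Suc l"
proof -
  have ind: "indep {i. i < Suc (2*l) \<and> even i}" unfolding indep_def by auto
  have "(\<lambda>i. i div 2) ` {i. i < Suc (2*l) \<and> even i} = {..<Suc l}"
  proof (rule set_eqI, rule iffI)
    fix k assume "k \<in> (\<lambda>i. i div 2) ` {i. i < Suc (2*l) \<and> even i}" then show "k \<in> {..<Suc l}" by auto
  next
    fix k assume k: "k \<in> {..<Suc l}"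
    then have "2*k \<in> {i. i < Suc (2*l) \<and> even i}" by auto
    then show "k \<in> (\<lambda>i. i div 2) ` {i. i < Suc (2*l) \<and> even i}" by (intro image_eqI[where x="2*k"]) auto
  qed
  then show ?thesis using card_image[OF indep_inj[OF ind]] by simp
qed


definition colT :: "nat \<Rightarrow> nat \<Rightarrow> nat \<Rightarrow> nat \<Rightarrow> nat" where
  "colT m t q = (\<lambda>i. if i \<in> It m t then 1 else if i = q then 3 else 2)"
definition colB :: "nat \<Rightarrow> nat \<Rightarrow> nat \<Rightarrow> nat \<Rightarrow> nat" where
  "colB m t q = (\<lambda>i. if i \<in> It m t then 2 else if i = q then 1 else 3)"
definition foB :: "nat \<Rightarrow> nat \<Rightarrow> nat" where
  "foB q = (\<lambda>i. if even i then 2 else if i = q then 1 else 3)"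
definition valid :: "nat \<Rightarrow> nat \<Rightarrow> nat \<Rightarrow> bool" where
  "valid m t q \<longleftrightarrow> t \<le> m \<and> q < 2*m \<and> q \<notin> It m t \<and> (0 < t \<and> t < m \<longrightarrow> q = 2*t - 1 \<or> q = 2*t)"

lemma dir_wall1:
  assumes "0 < t" "t < m" "Suc i < 2*m"
  shows "(colT m t (2*t-1) i < colT m t (2*t-1) (Suc i)) =
         (colB m (Suc t) (2*t+1) i < colB m (Suc t) (2*t+1) (Suc i))"
  using assms unfolding colT_def colB_def It_def by (auto; presburger)

lemma dir_wall2:
  assumes "0 < t" "t < m" "Suc i < 2*m"
  shows "(colT m t (2*t) i < colT m t (2*t) (Suc i)) =
         (colB m (t-1) (2*t-2) i < colB m (t-1) (2*t-2) (Suc i))"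
  using assms unfolding colT_def colB_def It_def by (auto; presburger)

lemma colB_proper:
  assumes "valid m t q" "Suc i < 2*m"
  shows "colB m t q i \<noteq> colB m t q (Suc i)"
  using assms unfolding colB_def valid_def It_def by (auto; presburger)

lemma foB_proper: "foB q i \<noteq> foB q (Suc i)"
  unfolding foB_def by auto

lemma dir_foB: "odd q \<Longrightarrow> (foB q i < foB q (Suc i)) = (if i = q - 1 then False else if i = q then True else even i)"
  unfolding foB_def by (auto; presburger)

lemma dir_colB0: "even q \<Longrightarrow> 0 < q \<Longrightarrow> Suc i < 2*m \<Longrightarrow>
   (colB m 0 q i < colB m 0 q (Suc i)) = (if i = q - 1 then False else if i = q then True else odd i)"
  unfolding colB_def It_def by (auto; presburger)

lemma dir_colBm: "odd q \<Longrightarrow> Suc i < 2*m \<Longrightarrow>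
   (colB m m q i < colB m m q (Suc i)) = (if i = q - 1 then False else if i = q then True else even i)"
  unfolding colB_def It_def by (auto; presburger)

lemma It_sub: "It m t \<subseteq> {..<2*m}" unfolding It_def by auto

lemma colB_c2: "valid m t q \<Longrightarrow> card {i. i < 2*m \<and> colB m t q i = 2} = m"
proof -
  assume v: "valid m t q"
  have "{i. i < 2*m \<and> colB m t q i = 2} = It m t" using It_sub[of m t] unfolding colB_def by auto
  then show ?thesis using card_It v unfolding valid_def by simp
qed

lemma colB_c1: "valid m t q \<Longrightarrow> card {i. i < 2*m \<and> colB m t q i = 1} = 1"
proof -
  assume v: "valid m t q"
  have "{i. i < 2*m \<and> colB m t q i = 1} = {q}" using v unfolding colB_def valid_def by auto
  then show ?thesis by simp
qed

lemma colB_c3: "valid m t q \<Longrightarrow> card {i. i < 2*m \<and> colB m t q i = 3} = m - 1"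
proof -
  assume v: "valid m t q"
  have e: "{i. i < 2*m \<and> colB m t q i = 3} = {..<2*m} - (It m t \<union> {q})" using v unfolding colB_def valid_def by auto
  have c: "card (It m t \<union> {q}) = Suc m" using v card_It[of t m] unfolding valid_def
    by (simp add: finite_subset[OF It_sub])
  have "card ({..<2*m} - (It m t \<union> {q})) = 2*m - Suc m"
    using c v It_sub[of m t] finite_subset[OF It_sub[of m t]] unfolding valid_def by (subst card_Diff_subset) auto
  then show ?thesis using e by simp
qed

lemma colB_cj: "j \<noteq> 1 \<Longrightarrow> j \<noteq> 2 \<Longrightarrow> j \<noteq> 3 \<Longrightarrow> card {i. i < 2*m \<and> colB m t q i = j} = 0"
  unfolding colB_def by auto

lemma foB_c2: "card {i. i < Suc (2*l) \<and> foB q i = 2} = Suc l"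
proof -
  have "{i. i < Suc (2*l) \<and> foB q i = 2} = {i. i < Suc (2*l) \<and> even i}" unfolding foB_def by auto
  then show ?thesis using card_evens by simp
qed

lemma foB_c1: "odd q \<Longrightarrow> q < Suc (2*l) \<Longrightarrow> card {i. i < Suc (2*l) \<and> foB q i = 1} = 1"
proof -
  assume "odd q" "q < Suc (2*l)"
  then have "{i. i < Suc (2*l) \<and> foB q i = 1} = {q}" unfolding foB_def by auto
  then show ?thesis by simp
qed

lemma foB_c3: "odd q \<Longrightarrow> q < Suc (2*l) \<Longrightarrow> card {i. i < Suc (2*l) \<and> foB q i = 3} = l - 1"
proof -
  assume v: "odd q" "q < Suc (2*l)"
  let ?E = "{i. i < Suc (2*l) \<and> even i}"
  have e: "{i. i < Suc (2*l) \<and> foB q i = 3} = {..<Suc (2*l)} - (?E \<union> {q})" using v unfolding foB_def by auto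
  have c: "card (?E \<union> {q}) = Suc (Suc l)" using v card_evens[of l] by simp
  have "card ({..<Suc (2*l)} - (?E \<union> {q})) = Suc (2*l) - Suc (Suc l)"
    using c v by (subst card_Diff_subset) auto
  then show ?thesis using e by simp
qed

lemma foB_cj: "j \<noteq> 1 \<Longrightarrow> j \<noteq> 2 \<Longrightarrow> j \<noteq> 3 \<Longrightarrow> card {i. i < n \<and> foB q i = j} = 0"
  unfolding foB_def by auto

lemma top_even:
  assumes I: "{i. i < 2*m \<and> f i = 1} = It m t" and t: "0 < t" "t < m"
    and vals: "\<forall>i<2*m. f i \<in> {1,2,3}" and c3: "card {i. i < 2*m \<and> f i = 3} = 1"
    and pr: "\<forall>i. Suc i < 2*m \<longrightarrow> f i \<noteq> f (Suc i)"
  shows "\<exists>q. (q = 2*t-1 \<or> q = 2*t) \<and> (\<forall>i<2*m. f i = colT m t q i)"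
proof -
  obtain q where q: "{i. i < 2*m \<and> f i = 3} = {q}" using c3 card_1_singletonE by blast
  have o: "odd (2*t-1)" "2*t-1 < 2*t" using t by presburger+
  have n1: "2*t-1 \<notin> It m t" "2*t \<notin> It m t" unfolding It_def using o by simp_all
  have l: "2*t-1 < 2*m" "2*t < 2*m" "Suc (2*t-1) = 2*t" using t by auto
  have "2*t-1 \<notin> {i. i < 2*m \<and> f i = 1}" "2*t \<notin> {i. i < 2*m \<and> f i = 1}" using n1 I by simp_all
  then have f1: "f (2*t-1) \<noteq> 1" "f (2*t) \<noteq> 1" using l by simp_all
  have "f (2*t-1) \<noteq> f (2*t)" using pr[rule_format, of "2*t-1"] l by simp
  moreover have "f (2*t-1) \<in> {1,2,3}" "f (2*t) \<in> {1,2,3}" using vals l by simp_all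
  ultimately have "f (2*t-1) = 3 \<or> f (2*t) = 3" using f1 by auto
  moreover have "f (2*t-1) = 3 \<Longrightarrow> q = 2*t-1" using q l(1) by (metis (mono_tags, lifting) mem_Collect_eq singletonD)
  moreover have "f (2*t) = 3 \<Longrightarrow> q = 2*t" using q l(2) by (metis (mono_tags, lifting) mem_Collect_eq singletonD)
  ultimately have qq: "q = 2*t-1 \<or> q = 2*t" by blast
  have "\<forall>i<2*m. f i = colT m t q i"
  proof (intro allI impI)
    fix i assume i: "i < 2*m"
    show "f i = colT m t q i"
    proof (cases "i \<in> It m t")
      case True
      then have "i \<in> {i. i < 2*m \<and> f i = 1}" using I by simp
      then show ?thesis using True unfolding colT_def by simp
    next
      case False
      then have "i \<notin> {i. i < 2*m \<and> f i = 1}" using I by simp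
      then have "f i \<noteq> 1" using i by simp
      moreover have "f i = 3 \<longleftrightarrow> i \<in> {i. i < 2*m \<and> f i = 3}" using i by simp
      then have "f i = 3 \<longleftrightarrow> i = q" using q by simp
      ultimately show ?thesis using vals i False unfolding colT_def by auto
    qed
  qed
  then show ?thesis using qq by blast
qed


lemma ascP_cong: "(\<And>i. i < length \<sigma> \<Longrightarrow> f i = g i) \<Longrightarrow> ascP \<sigma> f = ascP \<sigma> g"
  unfolding ascP_def by (rule Kc_cong) auto

definition SS :: "nat list \<Rightarrow> nat \<Rightarrow> (nat \<Rightarrow> nat) \<Rightarrow> (nat \<Rightarrow> nat) set" where
  "SS \<sigma> k b = {c. c \<in> {1..length \<sigma>} \<rightarrow>\<^sub>E {1..} \<and> proper_coloring \<sigma> c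
       \<and> asc \<sigma> c = k \<and> (\<forall>i. card {v \<in> {1..length \<sigma>}. c v = i} = b i)}"

lemma coeff_SS: "cqf_coeff \<sigma> k b = card (SS \<sigma> k b)"
  unfolding cqf_coeff_def SS_def by simp

lemma SS_fin: assumes "\<And>j. j \<noteq> 1 \<Longrightarrow> j \<noteq> 2 \<Longrightarrow> j \<noteq> 3 \<Longrightarrow> b j = 0"
  shows "finite (SS \<sigma> k b)"
proof (rule finite_subset)
  show "SS \<sigma> k b \<subseteq> {1..length \<sigma>} \<rightarrow>\<^sub>E {1..3}"
  proof
    fix c assume c: "c \<in> SS \<sigma> k b"
    have "c v \<in> {1..3}" if v: "v \<in> {1..length \<sigma>}" for v
    proof (rule ccontr)
      assume h: "c v \<notin> {1..3}"
      have "c v \<ge> 1" using c v unfolding SS_def by auto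
      then have "b (c v) = 0" using h assms by auto
      then have "card {u \<in> {1..length \<sigma>}. c u = c v} = 0" using c unfolding SS_def by auto
      then show False using v by auto
    qed
    then show "c \<in> {1..length \<sigma>} \<rightarrow>\<^sub>E {1..3}" using c unfolding SS_def by auto
  qed
  show "finite ({1..length \<sigma>} \<rightarrow>\<^sub>E {1..3::nat})" by (rule finite_PiE) auto
qed

lemma mem_SS:
  assumes lp: "is_labeled_path \<sigma>"
    and pos: "\<And>i. i < length \<sigma> \<Longrightarrow> f i \<ge> 1"
    and pr: "\<And>i. Suc i < length \<sigma> \<Longrightarrow> f i \<noteq> f (Suc i)"
    and as: "ascP \<sigma> f = k"
    and cnt: "\<And>j. card {i. i < length \<sigma> \<and> f i = j} = b j"
  shows "cb \<sigma> f \<in> SS \<sigma> k b"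
proof -
  have pe: "cb \<sigma> f \<in> {1..length \<sigma>} \<rightarrow>\<^sub>E {1..}"
  proof -
    have "f (inv_into {..<length \<sigma>} (nth \<sigma>) v) \<ge> 1" if "v \<in> {1..length \<sigma>}" for v
    proof -
      have "inv_into {..<length \<sigma>} (nth \<sigma>) v \<in> {..<length \<sigma>}"
        using lp_bij[OF lp] that unfolding bij_betw_def by (intro inv_into_into) simp
      then show ?thesis using pos by simp
    qed
    then show ?thesis unfolding cb_def by auto
  qed
  have prc: "proper_coloring \<sigma> (cb \<sigma> f)"
    using pr unfolding proper_iff[OF lp] by (simp add: cb_nth[OF lp])
  have "asc \<sigma> (cb \<sigma> f) = ascP \<sigma> (\<lambda>i. cb \<sigma> f (\<sigma>!i))" by (rule asc_eq[OF lp prc])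
  also have "\<dots> = ascP \<sigma> f" by (rule ascP_cong) (simp add: cb_nth[OF lp])
  finally have a: "asc \<sigma> (cb \<sigma> f) = k" using as by simp
  have "card {v \<in> {1..length \<sigma>}. cb \<sigma> f v = j} = b j" for j
  proof -
    have "card {v \<in> {1..length \<sigma>}. cb \<sigma> f v = j} = card {i. i < length \<sigma> \<and> cb \<sigma> f (\<sigma>!i) = j}"
      by (rule count_eq[OF lp])
    also have "{i. i < length \<sigma> \<and> cb \<sigma> f (\<sigma>!i) = j} = {i. i < length \<sigma> \<and> f i = j}"
      by (auto simp: cb_nth[OF lp])
    finally show ?thesis using cnt by simp
  qed
  then show ?thesis using pe prc a unfolding SS_def by auto
qed

lemma pos_SS:
  assumes lp: "is_labeled_path \<sigma>" and c: "c \<in> SS \<sigma> k b"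
  shows "\<And>i. i < length \<sigma> \<Longrightarrow> c (\<sigma>!i) \<ge> 1"
    and "\<And>i. Suc i < length \<sigma> \<Longrightarrow> c (\<sigma>!i) \<noteq> c (\<sigma>!Suc i)"
    and "ascP \<sigma> (\<lambda>i. c (\<sigma>!i)) = k"
    and "\<And>j. card {i. i < length \<sigma> \<and> c (\<sigma>!i) = j} = b j"
proof -
  have all: "c \<in> {1..length \<sigma>} \<rightarrow>\<^sub>E {1..} \<and> proper_coloring \<sigma> c \<and> asc \<sigma> c = k \<and> (\<forall>i. card {v \<in> {1..length \<sigma>}. c v = i} = b i)"
    using c unfolding SS_def by simp
  then have pe: "c \<in> {1..length \<sigma>} \<rightarrow>\<^sub>E {1..}" and pr: "proper_coloring \<sigma> c" and as: "asc \<sigma> c = k"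
    and cn: "\<And>j. card {v \<in> {1..length \<sigma>}. c v = j} = b j" by blast+
  show "1 \<le> c (\<sigma>!i)" if "i < length \<sigma>" for i using PiE_mem[OF pe lp_nth[OF lp that]] by simp
  show "c (\<sigma>!i) \<noteq> c (\<sigma>!Suc i)" if "Suc i < length \<sigma>" for i using pr that unfolding proper_iff[OF lp] by blast
  show "ascP \<sigma> (\<lambda>i. c (\<sigma>!i)) = k" using asc_eq[OF lp pr] as by simp
  show "card {i. i < length \<sigma> \<and> c (\<sigma>!i) = j} = b j" for j using cn[of j] count_eq[OF lp, of c j] by simp
qed

lemma cb_eq:
  assumes lp: "is_labeled_path \<sigma>" and c: "c \<in> {1..length \<sigma>} \<rightarrow>\<^sub>E X"
    and e: "\<And>i. i < length \<sigma> \<Longrightarrow> c (\<sigma>!i) = g i"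
  shows "c = cb \<sigma> g"
proof (rule ext)
  fix v
  show "c v = cb \<sigma> g v"
  proof (cases "v \<in> {1..length \<sigma>}")
    case True
    have im: "nth \<sigma> ` {..<length \<sigma>} = {1..length \<sigma>}" using lp_bij[OF lp] unfolding bij_betw_def by blast
    have "v \<in> nth \<sigma> ` {..<length \<sigma>}" using True im by blast
    then obtain i where i: "i < length \<sigma>" "v = \<sigma>!i" by blast
    have "c v = g i" using e[OF i(1)] i(2) by simp
    moreover have "cb \<sigma> g v = g i" using cb_nth[OF lp i(1)] i(2) by simp
    ultimately show ?thesis by simp
  next
    case False
    have "c v = undefined" using PiE_arb[OF c False] .
    moreover have "cb \<sigma> g v = undefined" using False unfolding cb_def restrict_def by (simp only: if_False)
    ultimately show ?thesis by simp
  qed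
qed

lemma alt_asc:
  assumes pos: "\<And>i. i < length \<sigma> \<Longrightarrow> f i \<ge> 1"
    and pr: "\<And>i. Suc i < length \<sigma> \<Longrightarrow> f i \<noteq> f (Suc i)"
    and alt: "\<And>i. i < length \<sigma> \<Longrightarrow> (f i = 1) = P i"
    and Palt: "\<And>i. P (Suc i) = (\<not> P i)"
  shows "ascP \<sigma> f = Kc \<sigma> P"
  unfolding ascP_def
proof (rule Kc_cong)
  fix i assume i: "Suc i < length \<sigma>"
  have "f i \<ge> 1" "f (Suc i) \<ge> 1" using pos i by auto
  moreover have "(f i = 1) = P i" "(f (Suc i) = 1) = (\<not> P i)" using alt[of i] alt[of "Suc i"] Palt i by auto
  ultimately show "(f i < f (Suc i)) = P i" using pr[OF i] by (cases "P i") auto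
qed

lemma indep_of:
  assumes "\<And>i. Suc i < n \<Longrightarrow> f i \<noteq> f (Suc i)"
  shows "indep {i. i < n \<and> f i = (1::nat)}"
  unfolding indep_def
proof
  fix i assume i: "i \<in> {i. i < n \<and> f i = 1}"
  show "Suc i \<notin> {i. i < n \<and> f i = 1}"
  proof
    assume s: "Suc i \<in> {i. i < n \<and> f i = 1}"
    then have "f i \<noteq> f (Suc i)" using assms[of i] by simp
    then show False using i s by simp
  qed
qed

lemma It_inj: "t \<le> m \<Longrightarrow> t' \<le> m \<Longrightarrow> It m t = It m t' \<Longrightarrow> t = t'"
proof (rule ccontr)
  assume a: "t \<le> m" "t' \<le> m" "It m t = It m t'" "t \<noteq> t'"
  show False
  proof (cases "t < t'")
    case True
    then have "2*t \<in> It m t'" "2*t \<notin> It m t" using a(2) unfolding It_def by auto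
    then show False using a by simp
  next
    case False
    then have "t' < t" using a(4) by simp
    then have "2*t' \<in> It m t" "2*t' \<notin> It m t'" using a(1) unfolding It_def by auto
    then show False using a by simp
  qed
qed

lemma It0: "It m 0 = {i. i < 2*m \<and> odd i}" unfolding It_def by auto
lemma Itm: "It m m = {i. i < 2*m \<and> even i}" unfolding It_def by auto


lemma odd_case:
  assumes lp: "is_labeled_path \<sigma>" and n: "length \<sigma> = Suc (2*l)"
    and q: "odd q" "Suc q < length \<sigma>" "(\<sigma>!(q-1) < \<sigma>!Suc (q-1)) \<noteq> (\<sigma>!q < \<sigma>!Suc q)"
    and a: "a 1 = Suc l" "\<And>j. j \<noteq> 1 \<Longrightarrow> j \<noteq> 2 \<Longrightarrow> j \<noteq> 3 \<Longrightarrow> a j = 0"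
    and b: "b 1 = 1" "b 2 = Suc l" "b 3 = l - 1" "\<And>j. j \<noteq> 1 \<Longrightarrow> j \<noteq> 2 \<Longrightarrow> j \<noteq> 3 \<Longrightarrow> b j = 0"
  shows "\<exists>k. card (SS \<sigma> k b) \<noteq> card (SS \<sigma> k a)"
proof -
  define k where "k = ascP \<sigma> (foB q)"
  define j where "j = q - 1"
  have jq: "Suc j = q" using q(1) unfolding j_def by presburger
  have fl: "Kc \<sigma> (\<lambda>i. foB q i < foB q (Suc i)) = Kc \<sigma> (\<lambda>i. even i) + 2 \<or> Kc \<sigma> (\<lambda>i. even i) = Kc \<sigma> (\<lambda>i. foB q i < foB q (Suc i)) + 2"
  proof (rule Kc_flip)
    show "Suc (Suc j) < length \<sigma>" using jq q by simp
    show "(foB q j < foB q (Suc j)) = (\<not> even j)" using dir_foB[OF q(1), of j] jq q(1) by (simp add: j_def)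
    show "(foB q (Suc j) < foB q (Suc (Suc j))) = (\<not> even (Suc j))" using dir_foB[OF q(1), of "Suc j"] jq q(1) by simp
    show "(foB q i < foB q (Suc i)) = even i" if "i \<noteq> j" "i \<noteq> Suc j" for i
      using dir_foB[OF q(1), of i] that jq by (simp add: j_def)
    show "(even j = (\<sigma>!j < \<sigma>!Suc j)) = (even (Suc j) = (\<sigma>!Suc j < \<sigma>!Suc (Suc j)))"
      using q(3) jq q(1) unfolding j_def by auto
  qed
  then have kne: "k \<noteq> Kc \<sigma> (\<lambda>i. even i)" unfolding k_def ascP_def by auto
  have empty: "SS \<sigma> k a = {}"
  proof (rule ccontr)
    assume "SS \<sigma> k a \<noteq> {}"
    then obtain c where c: "c \<in> SS \<sigma> k a" by blast
    define f where "f = (\<lambda>i. c (\<sigma>!i))"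
    have pos: "\<And>i. i < length \<sigma> \<Longrightarrow> f i \<ge> 1" and pr: "\<And>i. Suc i < length \<sigma> \<Longrightarrow> f i \<noteq> f (Suc i)"
      and as: "ascP \<sigma> f = k" and cn: "\<And>j. card {i. i < length \<sigma> \<and> f i = j} = a j"
      using pos_SS[OF lp c] unfolding f_def by auto
    have "{i. i < length \<sigma> \<and> f i = 1} = {i. i < Suc (2*l) \<and> even i}"
    proof (rule indep_odd)
      show "{i. i < length \<sigma> \<and> f i = 1} \<subseteq> {..<Suc (2*l)}" using n by auto
      show "indep {i. i < length \<sigma> \<and> f i = 1}" by (rule indep_of) (rule pr)
      show "card {i. i < length \<sigma> \<and> f i = 1} = Suc l" using cn[of 1] a(1) by simp
    qed
    note eq = this
    have alt: "(f i = 1) = even i" if i: "i < length \<sigma>" for i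
    proof -
      have "(i \<in> {i. i < length \<sigma> \<and> f i = 1}) = (i \<in> {i. i < Suc (2*l) \<and> even i})" using eq by simp
      then show ?thesis using i n by simp
    qed
    have P: "\<And>i::nat. even (Suc i) = (\<not> even i)" by simp
    have "ascP \<sigma> f = Kc \<sigma> (\<lambda>i. even i)" by (rule alt_asc[where P="\<lambda>i. even i", OF pos pr alt P])
    then show False using as kne by simp
  qed
  have mem: "cb \<sigma> (foB q) \<in> SS \<sigma> k b"
  proof (rule mem_SS[OF lp])
    show "\<And>i. i < length \<sigma> \<Longrightarrow> foB q i \<ge> 1" unfolding foB_def by auto
    show "\<And>i. Suc i < length \<sigma> \<Longrightarrow> foB q i \<noteq> foB q (Suc i)" by (rule foB_proper)
    show "ascP \<sigma> (foB q) = k" unfolding k_def ..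
    show "card {i. i < length \<sigma> \<and> foB q i = j} = b j" for j
    proof -
      have qn: "q < Suc (2*l)" using q n by simp
      consider "j = 1" | "j = 2" | "j = 3" | "j \<noteq> 1 \<and> j \<noteq> 2 \<and> j \<noteq> 3" by blast
      then show ?thesis
      proof cases
        case 1 then show ?thesis using foB_c1[OF q(1) qn] b n by simp
      next
        case 2 then show ?thesis using foB_c2[of l q] b n by simp
      next
        case 3 then show ?thesis using foB_c3[OF q(1) qn] b n by simp
      next
        case 4 then show ?thesis using foB_cj[of j "length \<sigma>" q] b by simp
      qed
    qed
  qed
  have "finite (SS \<sigma> k b)" by (rule SS_fin) (rule b(4))
  then have "card (SS \<sigma> k b) \<noteq> 0" using mem by auto
  then have "card (SS \<sigma> k b) \<noteq> card (SS \<sigma> k a)" using empty by simp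
  then show ?thesis by blast
qed

lemma flip_Kc:
  assumes "Suc (Suc j) < length \<sigma>"
    and "\<And>i. Suc i < length \<sigma> \<Longrightarrow> d' i = (if i = j then \<not> d j else if i = Suc j then \<not> d (Suc j) else d i)"
    and "(\<sigma>!j < \<sigma>!Suc j) \<noteq> (\<sigma>!Suc j < \<sigma>!Suc (Suc j))"
    and "d (Suc j) = (\<not> d j)"
  shows "Kc \<sigma> d' = Kc \<sigma> d + 2 \<or> Kc \<sigma> d = Kc \<sigma> d' + 2"
proof -
  define d'' where "d'' = (\<lambda>i. if i = j then \<not> d j else if i = Suc j then \<not> d (Suc j) else d i)"
  have "Kc \<sigma> d' = Kc \<sigma> d''" by (rule Kc_cong) (simp add: assms(2) d''_def)
  moreover have "Kc \<sigma> d'' = Kc \<sigma> d + 2 \<or> Kc \<sigma> d = Kc \<sigma> d'' + 2"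
    by (rule Kc_flip[OF assms(1)]) (use assms(3,4) in \<open>auto simp: d''_def\<close>)
  ultimately show ?thesis by simp
qed

lemma valid_iota:
  assumes "0 < t" "t < m" "q = 2*t-1 \<or> q = 2*t"
  shows "valid m (if q = 2*t-1 then Suc t else t-1) (if q = 2*t-1 then 2*t+1 else 2*t-2)"
  using assms unfolding valid_def It_def by (auto; presburger)

lemma asc_iota:
  assumes "length \<sigma> = 2*m" "0 < t" "t < m" "q = 2*t-1 \<or> q = 2*t"
  shows "ascP \<sigma> (colB m (if q = 2*t-1 then Suc t else t-1) (if q = 2*t-1 then 2*t+1 else 2*t-2)) = ascP \<sigma> (colT m t q)"
  unfolding ascP_def
proof (rule Kc_cong)
  fix i assume i: "Suc i < length \<sigma>"
  show "(colB m (if q = 2*t-1 then Suc t else t-1) (if q = 2*t-1 then 2*t+1 else 2*t-2) i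
        < colB m (if q = 2*t-1 then Suc t else t-1) (if q = 2*t-1 then 2*t+1 else 2*t-2) (Suc i))
        = (colT m t q i < colT m t q (Suc i))"
  proof (cases "q = 2*t-1")
    case True
    then show ?thesis using dir_wall1[OF assms(2,3), of i] i assms(1) by simp
  next
    case False
    then have "q = 2*t" "2*t \<noteq> 2*t-1" using assms(4) by auto
    then show ?thesis using dir_wall2[OF assms(2,3), of i] i assms(1) by simp
  qed
qed

lemma colB_SS:
  assumes lp: "is_labeled_path \<sigma>" and n: "length \<sigma> = 2*m" and v: "valid m t q"
    and k: "ascP \<sigma> (colB m t q) = k"
    and b: "b 1 = 1" "b 2 = m" "b 3 = m - 1" "\<And>j. j \<noteq> 1 \<Longrightarrow> j \<noteq> 2 \<Longrightarrow> j \<noteq> 3 \<Longrightarrow> b j = 0"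
  shows "cb \<sigma> (colB m t q) \<in> SS \<sigma> k b"
proof (rule mem_SS[OF lp])
  show "\<And>i. i < length \<sigma> \<Longrightarrow> colB m t q i \<ge> 1" unfolding colB_def by auto
  show "\<And>i. Suc i < length \<sigma> \<Longrightarrow> colB m t q i \<noteq> colB m t q (Suc i)" using colB_proper[OF v] n by simp
  show "ascP \<sigma> (colB m t q) = k" by (rule k)
  show "card {i. i < length \<sigma> \<and> colB m t q i = j} = b j" for j
  proof -
    consider "j = 1" | "j = 2" | "j = 3" | "j \<noteq> 1 \<and> j \<noteq> 2 \<and> j \<noteq> 3" by blast
    then show ?thesis
    proof cases
      case 1 then show ?thesis using colB_c1[OF v] b n by simp
    next
      case 2 then show ?thesis using colB_c2[OF v] b n by simp
    next
      case 3 then show ?thesis using colB_c3[OF v] b n by simp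
    next
      case 4 then show ?thesis using colB_cj[of j m t q] b n by simp
    qed
  qed
qed

definition iota :: "nat \<times> nat \<Rightarrow> nat \<times> nat" where
  "iota p = (if snd p = 2*fst p - 1 then (Suc (fst p), 2*fst p + 1) else (fst p - 1, 2*fst p - 2))"

lemma iota_A: "0 < t \<Longrightarrow> iota (t, 2*t-1) = (Suc t, 2*t+1)" unfolding iota_def by simp
lemma iota_B: "0 < t \<Longrightarrow> iota (t, 2*t) = (t-1, 2*t-2)" unfolding iota_def by simp

lemma iota_inj:
  assumes "0 < t" "0 < t'" "q = 2*t-1 \<or> q = 2*t" "q' = 2*t'-1 \<or> q' = 2*t'" "iota (t,q) = iota (t',q')"
  shows "(t,q) = (t',q')"
proof -
  have o: "odd (2*t+1)" "odd (2*t'+1)" "even (2*t-2)" "even (2*t'-2)" by presburger+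
  show ?thesis
  proof (cases "q = 2*t-1")
    case True
    show ?thesis
    proof (cases "q' = 2*t'-1")
      case True
      then show ?thesis using \<open>q = 2*t-1\<close> assms iota_A by auto
    next
      case False
      then have "q' = 2*t'" using assms by auto
      then have "(Suc t, 2*t+1) = (t'-1, 2*t'-2)" using True assms iota_A iota_B by metis
      then show ?thesis using o by auto
    qed
  next
    case False
    then have q: "q = 2*t" using assms by auto
    show ?thesis
    proof (cases "q' = 2*t'-1")
      case True
      then have "(t-1, 2*t-2) = (Suc t', 2*t'+1)" using q assms iota_A iota_B by metis
      then show ?thesis using o by auto
    next
      case False
      then have "q' = 2*t'" using assms by auto
      then have "(t-1, 2*t-2) = (t'-1, 2*t'-2)" using q assms iota_B by metis
      then show ?thesis using q \<open>q' = 2*t'\<close> assms by auto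
    qed
  qed
qed

lemma iota_notin:
  assumes "0 < t" "t < m" "q = 2*t-1 \<or> q = 2*t" "1 \<le> i0" "i0 \<le> 2*m-2"
  shows "iota (t,q) \<noteq> (if even i0 then 0 else m, i0)"
proof (cases "q = 2*t-1")
  case True
  then have e: "iota (t,q) = (Suc t, 2*t+1)" using iota_A assms by simp
  show ?thesis
  proof (cases "even i0")
    case True then show ?thesis using e by simp
  next
    case False then show ?thesis using e assms by auto
  qed
next
  case False
  then have "q = 2*t" using assms by auto
  then have e: "iota (t,q) = (t-1, 2*t-2)" using iota_B assms by simp
  show ?thesis
  proof (cases "even i0")
    case True then show ?thesis using e assms by auto
  next
    case False then show ?thesis using e assms by auto
  qed
qed

lemma par_aux:
  fixes k K0 K1 m :: nat
  assumes "k + 2 = K1 \<or> k = K1 + 2" "K0 + K1 = 2*m - 1" "2 \<le> m"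
  shows "k \<noteq> K0 \<and> k \<noteq> K1"
proof -
  have s: "Suc (K0 + K1) = 2*m" using assms(2,3) by simp
  then have o: "odd (K0 + K1)" by (metis even_Suc dvd_triv_left)
  have "k \<noteq> K0"
  proof
    assume k: "k = K0"
    from assms(1) show False
    proof
      assume "k + 2 = K1" then have "K0 + K1 = 2*(k+1)" using k by simp
      then show False using o by simp
    next
      assume "k = K1 + 2" then have "K0 + K1 = 2*(K1+1)" using k by simp
      then show False using o by simp
    qed
  qed
  then show ?thesis using assms(1) by auto
qed

lemma even_case:
  assumes lp: "is_labeled_path \<sigma>" and n: "length \<sigma> = 2*m" and m2: "2 \<le> m"
    and i0: "1 \<le> i0" "Suc (Suc i0) \<le> length \<sigma>" "(\<sigma>!(i0-1) < \<sigma>!Suc (i0-1)) \<noteq> (\<sigma>!i0 < \<sigma>!Suc i0)"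
    and a: "a 1 = m" "a 3 = 1" "\<And>j. j \<noteq> 1 \<Longrightarrow> j \<noteq> 2 \<Longrightarrow> j \<noteq> 3 \<Longrightarrow> a j = 0"
    and b: "b 1 = 1" "b 2 = m" "b 3 = m - 1" "\<And>j. j \<noteq> 1 \<Longrightarrow> j \<noteq> 2 \<Longrightarrow> j \<noteq> 3 \<Longrightarrow> b j = 0"
  shows "\<exists>k. card (SS \<sigma> k b) \<noteq> card (SS \<sigma> k a)"
proof -
  define t0 where "t0 = (if even i0 then 0 else m)"
  define k where "k = ascP \<sigma> (colB m t0 i0)"
  define j where "j = i0 - 1"
  have jq: "Suc j = i0" using i0(1) unfolding j_def by simp
  have v0: "valid m t0 i0" using i0 n unfolding valid_def t0_def It_def by auto
  have sumK: "Kc \<sigma> (\<lambda>i. even i) + Kc \<sigma> (\<lambda>i. odd i) = 2*m - 1" using Kc_compl[of \<sigma> "\<lambda>i. even i"] n by simp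
  have kK: "k \<noteq> Kc \<sigma> (\<lambda>i. even i) \<and> k \<noteq> Kc \<sigma> (\<lambda>i. odd i)"
  proof (cases "even i0")
    case True
    have "Kc \<sigma> (\<lambda>i. colB m 0 i0 i < colB m 0 i0 (Suc i)) = Kc \<sigma> (\<lambda>i. odd i) + 2 \<or> Kc \<sigma> (\<lambda>i. odd i) = Kc \<sigma> (\<lambda>i. colB m 0 i0 i < colB m 0 i0 (Suc i)) + 2"
    proof (rule flip_Kc[where j=j])
      show "Suc (Suc j) < length \<sigma>" using jq i0 by simp
      show "(colB m 0 i0 i < colB m 0 i0 (Suc i)) = (if i = j then \<not> odd j else if i = Suc j then \<not> odd (Suc j) else odd i)"
        if "Suc i < length \<sigma>" for i
        using dir_colB0[OF True, where m=m and i=i] that n i0(1) jq True unfolding j_def by auto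
      show "(\<sigma>!j < \<sigma>!Suc j) \<noteq> (\<sigma>!Suc j < \<sigma>!Suc (Suc j))" using i0(3) jq unfolding j_def by simp
      show "odd (Suc j) = (\<not> odd j)" by simp
    qed
    then have "k + 2 = Kc \<sigma> (\<lambda>i. odd i) \<or> k = Kc \<sigma> (\<lambda>i. odd i) + 2"
      unfolding k_def ascP_def t0_def using True by auto
    then show ?thesis using par_aux[OF _ sumK m2] by blast
  next
    case False
    have "Kc \<sigma> (\<lambda>i. colB m m i0 i < colB m m i0 (Suc i)) = Kc \<sigma> (\<lambda>i. even i) + 2 \<or> Kc \<sigma> (\<lambda>i. even i) = Kc \<sigma> (\<lambda>i. colB m m i0 i < colB m m i0 (Suc i)) + 2"
    proof (rule flip_Kc[where j=j])
      show "Suc (Suc j) < length \<sigma>" using jq i0 by simp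
      show "(colB m m i0 i < colB m m i0 (Suc i)) = (if i = j then \<not> even j else if i = Suc j then \<not> even (Suc j) else even i)"
        if "Suc i < length \<sigma>" for i
        using dir_colBm[OF False, where m=m and i=i] that n jq False unfolding j_def by auto
      show "(\<sigma>!j < \<sigma>!Suc j) \<noteq> (\<sigma>!Suc j < \<sigma>!Suc (Suc j))" using i0(3) jq unfolding j_def by simp
      show "even (Suc j) = (\<not> even j)" by simp
    qed
    then have "k + 2 = Kc \<sigma> (\<lambda>i. even i) \<or> k = Kc \<sigma> (\<lambda>i. even i) + 2"
      unfolding k_def ascP_def t0_def using False by auto
    moreover have "Kc \<sigma> (\<lambda>i. odd i) + Kc \<sigma> (\<lambda>i. even i) = 2*m - 1" using sumK by simp
    ultimately show ?thesis using par_aux[OF _ _ m2] by blast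
  qed
  define W where "W = {p. 0 < fst p \<and> fst p < m \<and> (snd p = 2*fst p - 1 \<or> snd p = 2*fst p) \<and> ascP \<sigma> (colT m (fst p) (snd p)) = k}"
  define G where "G = (\<lambda>p. cb \<sigma> (colT m (fst p) (snd p)))"
  define H where "H = (\<lambda>p. cb \<sigma> (colB m (fst p) (snd p)))"
  define \<iota> where "\<iota> = iota"
  have finW: "finite W"
    by (rule finite_subset[of _ "{..<m} \<times> {..<2*m}"]) (auto simp: W_def)
  have T: "SS \<sigma> k a \<subseteq> G ` W"
  proof
    fix c assume c: "c \<in> SS \<sigma> k a"
    define f where "f = (\<lambda>i. c (\<sigma>!i))"
    have pos: "\<And>i. i < length \<sigma> \<Longrightarrow> f i \<ge> 1" and pr: "\<And>i. Suc i < length \<sigma> \<Longrightarrow> f i \<noteq> f (Suc i)"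
      and as: "ascP \<sigma> f = k" and cn: "\<And>j. card {i. i < length \<sigma> \<and> f i = j} = a j"
      using pos_SS[OF lp c] unfolding f_def by auto
    have pe: "c \<in> {1..length \<sigma>} \<rightarrow>\<^sub>E {1..}" using c unfolding SS_def by simp
    have "\<exists>t\<le>m. {i. i < length \<sigma> \<and> f i = 1} = It m t"
    proof (rule indep_even)
      show "{i. i < length \<sigma> \<and> f i = 1} \<subseteq> {..<2*m}" using n by auto
      show "indep {i. i < length \<sigma> \<and> f i = 1}" by (rule indep_of) (rule pr)
      show "card {i. i < length \<sigma> \<and> f i = 1} = m" using cn[of 1] a(1) by simp
    qed
    then obtain t where t: "t \<le> m" and I: "{i. i < length \<sigma> \<and> f i = 1} = It m t" by blast
    have alt: "(f i = 1) = (i \<in> It m t)" if "i < length \<sigma>" for i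
    proof -
      have "(i \<in> {i. i < length \<sigma> \<and> f i = 1}) = (i \<in> It m t)" using I by simp
      then show ?thesis using that by simp
    qed
    have vals: "\<forall>i<2*m. f i \<in> {1,2,3}"
    proof (intro allI impI)
      fix i assume i: "i < 2*m"
      show "f i \<in> {1,2,3}"
      proof (rule ccontr)
        assume h: "f i \<notin> {1,2,3}"
        then have "a (f i) = 0" using a(3) by auto
        then have "card {u. u < length \<sigma> \<and> f u = f i} = 0" using cn by simp
        moreover have "finite {u. u < length \<sigma> \<and> f u = f i}" by simp
        ultimately show False using i n by auto
      qed
    qed
    have c3: "card {i. i < 2*m \<and> f i = 3} = 1" using cn[of 3] a(2) n by simp
    show "c \<in> G ` W"
    proof (cases "t = 0 \<or> t = m")
      case True
      have P1: "\<And>i::nat. odd (Suc i) = (\<not> odd i)" by simp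
      have P2: "\<And>i::nat. even (Suc i) = (\<not> even i)" by simp
      have "ascP \<sigma> f = Kc \<sigma> (\<lambda>i. odd i) \<or> ascP \<sigma> f = Kc \<sigma> (\<lambda>i. even i)"
      proof (cases "t = 0")
        case True
        have altO: "(f i = 1) = odd i" if "i < length \<sigma>" for i using alt[OF that] that n True by (simp add: It0)
        have "ascP \<sigma> f = Kc \<sigma> (\<lambda>i. odd i)" by (rule alt_asc[where P="\<lambda>i. odd i", OF pos pr altO P1])
        then show ?thesis by simp
      next
        case False
        then have tm: "t = m" using \<open>t = 0 \<or> t = m\<close> by simp
        have altE: "(f i = 1) = even i" if "i < length \<sigma>" for i using alt[OF that] that n tm by (simp add: Itm)
        have "ascP \<sigma> f = Kc \<sigma> (\<lambda>i. even i)" by (rule alt_asc[where P="\<lambda>i. even i", OF pos pr altE P2])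
        then show ?thesis by simp
      qed
      then show ?thesis using as kK by auto
    next
      case False
      then have tt: "0 < t" "t < m" using t by auto
      have I2: "{i. i < 2*m \<and> f i = 1} = It m t" using I n by simp
      have pr2: "\<forall>i. Suc i < 2*m \<longrightarrow> f i \<noteq> f (Suc i)" using pr n by simp
      obtain q where q: "q = 2*t-1 \<or> q = 2*t" and fq: "\<forall>i<2*m. f i = colT m t q i"
        using top_even[OF I2 tt vals c3 pr2] by blast
      have ceq: "c = cb \<sigma> (colT m t q)" by (rule cb_eq[OF lp pe]) (use fq n in \<open>simp add: f_def\<close>)
      have "ascP \<sigma> (colT m t q) = k" using as ascP_cong[of \<sigma> f "colT m t q"] fq n by simp
      then have "(t,q) \<in> W" using tt q unfolding W_def by simp
      then show ?thesis using ceq unfolding G_def by force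
    qed
  qed
  have Bsub: "H ` (\<iota> ` W \<union> {(t0, i0)}) \<subseteq> SS \<sigma> k b"
  proof
    fix c assume "c \<in> H ` (\<iota> ` W \<union> {(t0, i0)})"
    then consider p where "p \<in> W" "c = H (\<iota> p)" | "c = H (t0, i0)" by blast
    then show "c \<in> SS \<sigma> k b"
    proof cases
      case 1
      then have p: "0 < fst p" "fst p < m" "snd p = 2*fst p - 1 \<or> snd p = 2*fst p" "ascP \<sigma> (colT m (fst p) (snd p)) = k"
        unfolding W_def by auto
      have e: "\<iota> p = (if snd p = 2*fst p-1 then Suc (fst p) else fst p-1, if snd p = 2*fst p-1 then 2*fst p+1 else 2*fst p-2)"
        unfolding \<iota>_def iota_def by auto
      have vv: "valid m (fst (\<iota> p)) (snd (\<iota> p))" using valid_iota[OF p(1,2,3)] e by simp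
      have aa: "ascP \<sigma> (colB m (fst (\<iota> p)) (snd (\<iota> p))) = k" using asc_iota[OF n p(1,2,3)] p(4) e by simp
      have "H (\<iota> p) \<in> SS \<sigma> k b" unfolding H_def by (rule colB_SS[OF lp n vv aa b])
      then show ?thesis using 1 by simp
    next
      case 2
      have "H (t0, i0) \<in> SS \<sigma> k b" unfolding H_def by (simp add: colB_SS[OF lp n v0 _ b] k_def)
      then show ?thesis using 2 by simp
    qed
  qed
  have validall: "valid m (fst p) (snd p)" if "p \<in> \<iota> ` W \<union> {(t0, i0)}" for p
  proof -
    from that consider p' where "p' \<in> W" "p = \<iota> p'" | "p = (t0, i0)" by blast
    then show ?thesis
    proof cases
      case 1
      then have p: "0 < fst p'" "fst p' < m" "snd p' = 2*fst p' - 1 \<or> snd p' = 2*fst p'" unfolding W_def by auto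
      have e: "\<iota> p' = (if snd p' = 2*fst p'-1 then Suc (fst p') else fst p'-1, if snd p' = 2*fst p'-1 then 2*fst p'+1 else 2*fst p'-2)"
        unfolding \<iota>_def iota_def by auto
      show ?thesis using valid_iota[OF p] e 1 by simp
    next
      case 2 then show ?thesis using v0 by simp
    qed
  qed
  have injH: "inj_on H (\<iota> ` W \<union> {(t0, i0)})"
  proof (rule inj_onI)
    fix p p' assume pp: "p \<in> \<iota> ` W \<union> {(t0, i0)}" "p' \<in> \<iota> ` W \<union> {(t0, i0)}" and h: "H p = H p'"
    have v: "valid m (fst p) (snd p)" "valid m (fst p') (snd p')" using validall pp by auto
    have ev: "colB m (fst p) (snd p) i = colB m (fst p') (snd p') i" if "i < 2*m" for i
    proof -
      have "H p (\<sigma>!i) = H p' (\<sigma>!i)" using h by simp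
      then show ?thesis unfolding H_def using cb_nth[OF lp] that n by simp
    qed
    have s1: "{i. i < 2*m \<and> colB m (fst p) (snd p) i = 1} = {i. i < 2*m \<and> colB m (fst p') (snd p') i = 1}"
      by (rule Collect_cong) (use ev in auto)
    have s2: "{i. i < 2*m \<and> colB m (fst p) (snd p) i = 2} = {i. i < 2*m \<and> colB m (fst p') (snd p') i = 2}"
      by (rule Collect_cong) (use ev in auto)
    have q1: "{i. i < 2*m \<and> colB m (fst p) (snd p) i = 1} = {snd p}"
      using v(1) unfolding colB_def valid_def by auto
    have q2: "{i. i < 2*m \<and> colB m (fst p') (snd p') i = 1} = {snd p'}"
      using v(2) unfolding colB_def valid_def by auto
    have t1: "{i. i < 2*m \<and> colB m (fst p) (snd p) i = 2} = It m (fst p)"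
      using It_sub[of m "fst p"] unfolding colB_def by auto
    have t2: "{i. i < 2*m \<and> colB m (fst p') (snd p') i = 2} = It m (fst p')"
      using It_sub[of m "fst p'"] unfolding colB_def by auto
    have "snd p = snd p'" using s1 q1 q2 by simp
    moreover have "fst p = fst p'" using It_inj[of "fst p" m "fst p'"] v s2 t1 t2 unfolding valid_def by simp
    ultimately show "p = p'" by (simp add: prod_eq_iff)
  qed
  have injI: "inj_on \<iota> W"
  proof (rule inj_onI)
    fix p p' assume pW: "p \<in> W" "p' \<in> W" and h: "\<iota> p = \<iota> p'"
    have p: "0 < fst p" "snd p = 2*fst p - 1 \<or> snd p = 2*fst p" using pW unfolding W_def by auto
    have p': "0 < fst p'" "snd p' = 2*fst p' - 1 \<or> snd p' = 2*fst p'" using pW unfolding W_def by auto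
    have "(fst p, snd p) = (fst p', snd p')" using iota_inj[OF p(1) p'(1) p(2) p'(2)] h unfolding \<iota>_def by simp
    then show "p = p'" by (simp add: prod_eq_iff)
  qed
  have notin: "(t0, i0) \<notin> \<iota> ` W"
  proof
    assume "(t0, i0) \<in> \<iota> ` W"
    then obtain p where pW: "p \<in> W" and e: "(t0, i0) = \<iota> p" by blast
    have p: "0 < fst p" "fst p < m" "snd p = 2*fst p - 1 \<or> snd p = 2*fst p" using pW unfolding W_def by auto
    have "i0 \<le> 2*m - 2" using i0 n by simp
    then have "iota (fst p, snd p) \<noteq> (t0, i0)" using iota_notin[OF p i0(1)] unfolding t0_def by simp
    then show False using e unfolding \<iota>_def by simp
  qed
  have "card (SS \<sigma> k a) \<le> card (G ` W)" by (rule card_mono) (use T finW in auto)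
  also have "\<dots> \<le> card W" by (rule card_image_le[OF finW])
  also have "\<dots> < card (\<iota> ` W \<union> {(t0, i0)})"
    using notin card_image[OF injI] finW by simp
  also have "\<dots> = card (H ` (\<iota> ` W \<union> {(t0, i0)}))" by (rule card_image[OF injH, symmetric])
  also have "\<dots> \<le> card (SS \<sigma> k b)" by (rule card_mono[OF SS_fin[OF b(4)] Bsub])
  finally have "card (SS \<sigma> k a) \<noteq> card (SS \<sigma> k b)" by simp
  then show ?thesis by metis
qed

lemma adp_nth: "i < length \<sigma> - 1 \<Longrightarrow> (ad_pattern \<sigma>)!i = (if \<sigma>!i < \<sigma>!Suc i then A else D)"
  unfolding ad_pattern_def by simp

lemma adp_len: "length (ad_pattern \<sigma>) = length \<sigma> - 1"
  unfolding ad_pattern_def by simp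

theorem proposition4p7:
  fixes \<sigma> :: "nat list"
  assumes "is_labeled_path \<sigma>"
    and "\<not> sublist [D, D, A, A] (ad_pattern \<sigma>)"
    and "\<not> prefix [D, A, A] (ad_pattern \<sigma>)"
    and "\<not> suffix [D, D, A] (ad_pattern \<sigma>)"
    and "regular_ribbon (ribbon_comp (ad_pattern \<sigma>))"
  shows "\<not> cqf_symmetric \<sigma>"
proof
  assume sym: "cqf_symmetric \<sigma>"
  note lp = assms(1)
  define n where "n = length \<sigma>"
  define a where "a = (\<lambda>j::nat. if j = 1 then (n+1) div 2 else if j = 2 then n div 2 - 1 else if j = 3 then 1 else 0)"
  define \<pi> where "\<pi> = (\<lambda>j::nat. if j = 1 then 3 else if j = 2 then 1 else if j = 3 then 2 else j)"
  have inj: "inj \<pi>" unfolding inj_def \<pi>_def by auto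
  have surj: "surj \<pi>"
    unfolding surj_def
  proof
    fix y :: nat
    show "\<exists>x. y = \<pi> x"
      by (rule exI[of _ "if y = 3 then 1 else if y = 1 then 2 else if y = 2 then 3 else y"]) (simp add: \<pi>_def)
  qed
  have bij: "bij \<pi>" using inj surj by (simp add: bij_def)
  have p0: "\<pi> 0 = 0" unfolding \<pi>_def by simp
  have eqc: "\<And>k. card (SS \<sigma> k (a \<circ> \<pi>)) = card (SS \<sigma> k a)"
    using sym bij p0 unfolding cqf_symmetric_def coeff_SS by blast
  have b1: "(a \<circ> \<pi>) 1 = 1" "(a \<circ> \<pi>) 2 = (n+1) div 2" "(a \<circ> \<pi>) 3 = n div 2 - 1"
    unfolding a_def \<pi>_def by simp_all
  have b4: "\<And>j. j \<noteq> 1 \<Longrightarrow> j \<noteq> 2 \<Longrightarrow> j \<noteq> 3 \<Longrightarrow> (a \<circ> \<pi>) j = 0"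
    unfolding a_def \<pi>_def by simp
  have a1: "a 1 = (n+1) div 2" "a 3 = 1" unfolding a_def by simp_all
  have a4: "\<And>j. j \<noteq> 1 \<Longrightarrow> j \<noteq> 2 \<Longrightarrow> j \<noteq> 3 \<Longrightarrow> a j = 0" unfolding a_def by simp
  obtain jj where "Suc jj < length (ribbon_comp (ad_pattern \<sigma>))" "ribbon_comp (ad_pattern \<sigma>) ! jj = 2"
    using assms(5) unfolding regular_ribbon_def by blast
  then have "2 \<in> set (ribbon_comp (ad_pattern \<sigma>))" by (metis Suc_lessD nth_mem)
  then obtain j where iso: "isoA (ad_pattern \<sigma>) j" using rc_iso by blast
  have jn: "Suc j < n" using iso unfolding isoA_def adp_len n_def by auto
  have upj: "\<sigma>!j < \<sigma>!Suc j" using iso adp_nth[of j \<sigma>] jn unfolding isoA_def n_def by (auto split: if_splits)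
  have upl: "j = 0 \<or> \<not> (\<sigma>!(j-1) < \<sigma>!Suc (j-1))"
    using iso adp_nth[of "j-1" \<sigma>] jn unfolding isoA_def n_def by (auto split: if_splits)
  have upr: "Suc (Suc j) = n \<or> \<not> (\<sigma>!Suc j < \<sigma>!Suc (Suc j))"
  proof (cases "Suc (Suc j) = n")
    case False
    then have lt: "Suc j < length \<sigma> - 1" using jn unfolding n_def by simp
    then have "ad_pattern \<sigma> ! Suc j = D" using iso unfolding isoA_def adp_len by auto
    then show ?thesis using adp_nth[OF lt] by (auto split: if_splits)
  qed simp
  have n3: "3 \<le> n"
  proof (rule ccontr)
    assume "\<not> 3 \<le> n"
    then have n2: "n = 2" "j = 0" using jn by auto
    have "ad_pattern \<sigma> = [A]"
    proof (rule nth_equalityI)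
      show "length (ad_pattern \<sigma>) = length [A]" using n2 adp_len[of \<sigma>] n_def by simp
      show "ad_pattern \<sigma> ! i = [A] ! i" if "i < length (ad_pattern \<sigma>)" for i
        using that iso n2 adp_len[of \<sigma>] n_def unfolding isoA_def by simp
    qed
    then show False using assms(5) unfolding regular_ribbon_def by simp
  qed
  show False
  proof (cases "even n")
    case True
    define m where "m = n div 2"
    have nm: "length \<sigma> = 2*m" using True unfolding m_def n_def by simp
    have m2: "2 \<le> m" using n3 True unfolding m_def by presburger
    define i0 where "i0 = (if j \<ge> 1 then j else 1)"
    have i0: "1 \<le> i0" "Suc (Suc i0) \<le> length \<sigma>" "(\<sigma>!(i0-1) < \<sigma>!Suc (i0-1)) \<noteq> (\<sigma>!i0 < \<sigma>!Suc i0)"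
    proof -
      show "1 \<le> i0" unfolding i0_def by simp
      show "Suc (Suc i0) \<le> length \<sigma>" using jn n3 unfolding i0_def n_def by auto
      show "(\<sigma>!(i0-1) < \<sigma>!Suc (i0-1)) \<noteq> (\<sigma>!i0 < \<sigma>!Suc i0)"
      proof (cases "j \<ge> 1")
        case True then show ?thesis using upl upj unfolding i0_def by auto
      next
        case False then have "j = 0" by simp
        then show ?thesis using upr upj n3 unfolding i0_def by auto
      qed
    qed
    have "\<exists>k. card (SS \<sigma> k (a \<circ> \<pi>)) \<noteq> card (SS \<sigma> k a)"
    proof (rule even_case[OF lp nm m2 i0])
      show "a 1 = m" using a1 True unfolding m_def by presburger
      show "a 3 = 1" by (rule a1(2))
      show "\<And>j. j \<noteq> 1 \<Longrightarrow> j \<noteq> 2 \<Longrightarrow> j \<noteq> 3 \<Longrightarrow> a j = 0" by (rule a4)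
      show "(a \<circ> \<pi>) 1 = 1" by (rule b1(1))
      show "(a \<circ> \<pi>) 2 = m" using b1(2) True unfolding m_def by presburger
      show "(a \<circ> \<pi>) 3 = m - 1" using b1(3) unfolding m_def by simp
      show "\<And>j. j \<noteq> 1 \<Longrightarrow> j \<noteq> 2 \<Longrightarrow> j \<noteq> 3 \<Longrightarrow> (a \<circ> \<pi>) j = 0" by (rule b4)
    qed
    then show False using eqc by simp
  next
    case False
    define l where "l = n div 2"
    have nl: "length \<sigma> = Suc (2*l)" using False unfolding l_def n_def by presburger
    define q where "q = (if even j then Suc j else j)"
    have q: "odd q" "Suc q < length \<sigma>" "(\<sigma>!(q-1) < \<sigma>!Suc (q-1)) \<noteq> (\<sigma>!q < \<sigma>!Suc q)"
    proof -
      show "odd q" unfolding q_def by simp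
      show "Suc q < length \<sigma>"
      proof (cases "even j")
        case True
        then have "Suc (Suc j) \<noteq> n" using False by auto
        then show ?thesis using jn True unfolding q_def n_def by auto
      next
        case False then show ?thesis using jn unfolding q_def n_def by simp
      qed
      show "(\<sigma>!(q-1) < \<sigma>!Suc (q-1)) \<noteq> (\<sigma>!q < \<sigma>!Suc q)"
      proof (cases "even j")
        case True
        then have "Suc (Suc j) \<noteq> n" using False by auto
        then show ?thesis using upr upj True unfolding q_def by auto
      next
        case False
        then have "j \<noteq> 0" by (metis even_zero)
        then show ?thesis using upl upj False unfolding q_def by auto
      qed
    qed
    have "\<exists>k. card (SS \<sigma> k (a \<circ> \<pi>)) \<noteq> card (SS \<sigma> k a)"
    proof (rule odd_case[OF lp nl q])
      show "a 1 = Suc l" using a1 False unfolding l_def by presburger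
      show "\<And>j. j \<noteq> 1 \<Longrightarrow> j \<noteq> 2 \<Longrightarrow> j \<noteq> 3 \<Longrightarrow> a j = 0" by (rule a4)
      show "(a \<circ> \<pi>) 1 = 1" by (rule b1(1))
      show "(a \<circ> \<pi>) 2 = Suc l" using b1(2) False unfolding l_def by presburger
      show "(a \<circ> \<pi>) 3 = l - 1" using b1(3) unfolding l_def by simp
      show "\<And>j. j \<noteq> 1 \<Longrightarrow> j \<noteq> 2 \<Longrightarrow> j \<noteq> 3 \<Longrightarrow> (a \<circ> \<pi>) j = 0" by (rule b4)
    qed
    then show False using eqc by simp
  qed
qed

end
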